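(* Let $T:\mathcal{M}_2(\mathbb{C})\to\mathcal{M}_2(\mathbb{C})$ be a positive trace-preserving linear map and $\Lambda:=\mathrm{spec}(T)$. Then (1) $1\in\Lambda$ and $\Lambda$ is invariant under complex conjugation (as a multiset), and (2) $|\lambda|\le1$ for all $\lambda\in\Lambda$. Conversely, if a multiset $\Lambda$ of four complex numbers satisfies (1) and (2), then there is a unital, trace-preserving, positive linear map $T$ on $\mathcal{M}_2(\mathbb{C})$ with $\mathrm{spec}(T)=\Lambda$.
   Context: A linear map on $\mathcal{M}_d(\mathbb{C})$ is positive if it maps positive semidefinite matrices to positive semidefinite matrices, trace-preserving if $\mathrm{tr}[T(X)]=\mathrm{tr}[X]$, unital if $T(\mathbbm{1})=\mathbbm{1}$. $\mathrm{spec}(T)$ is the spectrum of $T$ as a linear operator on $\mathcal{M}_2(\mathbb{C})$, counted with algebraic multiplicity. *)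

theory Defs
  imports "Jordan_Normal_Form.Matrix" "Jordan_Normal_Form.Char_Poly"
    "HOL-Computational_Algebra.Polynomial"
begin

definition tr2 :: "complex mat \<Rightarrow> complex" where
  "tr2 A = A $$ (0,0) + A $$ (1,1)"

definition adj2 :: "complex mat \<Rightarrow> complex mat" where
  "adj2 A = mat 2 2 (\<lambda>(i,j). cnj (A $$ (j,i)))"

definition psd2 :: "complex mat \<Rightarrow> bool" where
  "psd2 A \<longleftrightarrow> A \<in> carrier_mat 2 2 \<and> adj2 A = A \<and>
     (\<forall>v :: nat \<Rightarrow> complex.
        let q = (\<Sum>i<2. \<Sum>j<2. cnj (v i) * A $$ (i,j) * v j) in Im q = 0 \<and> Re q \<ge> 0)"

definition linear_M2 :: "(complex mat \<Rightarrow> complex mat) \<Rightarrow> bool" where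
  "linear_M2 T \<longleftrightarrow>
     (\<forall>A \<in> carrier_mat 2 2. T A \<in> carrier_mat 2 2) \<and>
     (\<forall>A \<in> carrier_mat 2 2. \<forall>B \<in> carrier_mat 2 2. T (A + B) = T A + T B) \<and>
     (\<forall>A \<in> carrier_mat 2 2. \<forall>c. T (c \<cdot>\<^sub>m A) = c \<cdot>\<^sub>m T A)"

definition positive_M2 :: "(complex mat \<Rightarrow> complex mat) \<Rightarrow> bool" where
  "positive_M2 T \<longleftrightarrow> (\<forall>A. psd2 A \<longrightarrow> psd2 (T A))"

definition trace_preserving_M2 :: "(complex mat \<Rightarrow> complex mat) \<Rightarrow> bool" where
  "trace_preserving_M2 T \<longleftrightarrow> (\<forall>A \<in> carrier_mat 2 2. tr2 (T A) = tr2 A)"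

definition unital_M2 :: "(complex mat \<Rightarrow> complex mat) \<Rightarrow> bool" where
  "unital_M2 T \<longleftrightarrow> T (1\<^sub>m 2) = 1\<^sub>m 2"

definition munit2 :: "nat \<Rightarrow> complex mat" where
  "munit2 l = mat 2 2 (\<lambda>(i,j). if i = l div 2 \<and> j = l mod 2 then 1 else 0)"

text \<open>The 4x4 matrix of T in the basis of matrix units.\<close>
definition op_mat :: "(complex mat \<Rightarrow> complex mat) \<Rightarrow> complex mat" where
  "op_mat T = mat 4 4 (\<lambda>(k,l). T (munit2 l) $$ (k div 2, k mod 2))"

definition spec_M2 :: "(complex mat \<Rightarrow> complex mat) \<Rightarrow> complex multiset" where
  "spec_M2 T = proots (char_poly (op_mat T))"

end

theory Submission
  imports Defs
begin


lemma less2: "(i::nat) < 2 \<longleftrightarrow> i = 0 \<or> i = 1" by auto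

lemma qform2: "(\<Sum>i<2. \<Sum>j<2. f i j) = f 0 0 + f 0 1 + f 1 0 + f (1::nat) (1::nat)"
  by (simp add: numeral_2_eq_2 add.assoc)

lemma psd2_iff: "psd2 A \<longleftrightarrow> A \<in> carrier_mat 2 2 \<and> A$$(1,0) = cnj (A$$(0,1)) \<and>
   Im (A$$(0,0)) = 0 \<and> Im (A$$(1,1)) = 0 \<and> Re (A$$(0,0)) \<ge> 0 \<and> Re (A$$(1,1)) \<ge> 0 \<and>
   (cmod (A$$(0,1)))^2 \<le> Re (A$$(0,0)) * Re (A$$(1,1))"
  (is "?L \<longleftrightarrow> ?R")
proof
  assume L: ?L
  hence car: "A \<in> carrier_mat 2 2" and adj: "adj2 A = A" and q: "\<And>v. Im (\<Sum>i<2. \<Sum>j<2. cnj (v i) * A $$ (i,j) * v j) = 0 \<and> Re (\<Sum>i<2. \<Sum>j<2. cnj (v i) * A $$ (i,j) * v j) \<ge> 0"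
    unfolding psd2_def Let_def by auto
  have h10: "A$$(1,0) = cnj (A$$(0,1))"
    using arg_cong[OF adj, of "\<lambda>M. M$$(1,0)"] by (simp add: adj2_def)
  define a where "a = A$$(0,0)"
  define b where "b = A$$(0,1)"
  define d where "d = A$$(1,1)"
  have qf: "\<And>v. (\<Sum>i<2. \<Sum>j<2. cnj (v i) * A $$ (i,j) * v j) = 
     cnj (v 0) * a * v 0 + cnj (v 0) * b * v 1 + cnj (v 1) * cnj b * v 0 + cnj (v 1) * d * v 1"
    unfolding qform2 a_def b_def d_def h10 by simp
  have qa: "Im a = 0 \<and> Re a \<ge> 0" using q[of "\<lambda>i. if i = 0 then 1 else 0"] unfolding qf by simp
  have qd: "Im d = 0 \<and> Re d \<ge> 0" using q[of "\<lambda>i. if i = 0 then 0 else 1"] unfolding qf by simp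
  have "Re a * (Re a * Re d - (cmod b)^2) \<ge> 0"
  proof -
    have "Re (cnj (-b) * a * (-b) + cnj (-b) * b * a + cnj a * cnj b * (-b) + cnj a * d * a) \<ge> 0"
      using q[of "\<lambda>i. if i = 0 then -b else a"] unfolding qf by simp
    moreover have "Re (cnj (-b) * a * (-b) + cnj (-b) * b * a + cnj a * cnj b * (-b) + cnj a * d * a)
       = Re a * (Re a * Re d - (cmod b)^2)"
      unfolding cmod_power2 using qa qd by (simp add: algebra_simps power2_eq_square)
    ultimately show ?thesis by simp
  qed
  moreover have "Re d * (Re a * Re d - (cmod b)^2) \<ge> 0"
  proof -
    have "Re (cnj d * a * d + cnj d * b * (- cnj b) + cnj (- cnj b) * cnj b * d + cnj (- cnj b) * d * (- cnj b)) \<ge> 0"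
      using q[of "\<lambda>i. if i = 0 then d else - cnj b"] unfolding qf by simp
    moreover have "Re (cnj d * a * d + cnj d * b * (- cnj b) + cnj (- cnj b) * cnj b * d + cnj (- cnj b) * d * (- cnj b))
       = Re d * (Re a * Re d - (cmod b)^2)"
      unfolding cmod_power2 using qa qd by (simp add: algebra_simps power2_eq_square)
    ultimately show ?thesis by simp
  qed
  moreover have "Re a + Re d - 2 * cmod b \<ge> 0"
  proof (cases "b = 0")
    case True thus ?thesis using qa qd by simp
  next
    case False
    define r where "r = complex_of_real (cmod b)"
    have r0: "r \<noteq> 0" using False r_def by simp
    have bc: "b * cnj b = r * r" using complex_norm_square[of b] unfolding r_def power2_eq_square by simp
    have cr: "cnj r = r" unfolding r_def by simp
    define w where "w = - cnj b / r"
    have e1: "b * w = - r" unfolding w_def using bc r0 by (simp add: divide_simps)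
    have e2: "cnj w * cnj b = - r" unfolding w_def using bc r0 cr by (simp add: divide_simps)
    have e3: "cnj w * w = 1" unfolding w_def using bc r0 cr by (simp add: divide_simps)
    have "Re (cnj 1 * a * 1 + cnj 1 * b * w + cnj w * cnj b * 1 + cnj w * d * w) \<ge> 0"
      using q[of "\<lambda>i. if i = 0 then 1 else w"] unfolding qf by simp
    also have "cnj 1 * a * 1 + cnj 1 * b * w + cnj w * cnj b * 1 + cnj w * d * w = a - r - r + d * (cnj w * w)"
      using e1 e2 by (simp add: algebra_simps)
    finally have "Re (a - r - r + d) \<ge> 0" using e3 by simp
    thus ?thesis unfolding r_def by simp
  qed
  ultimately have "(cmod b)^2 \<le> Re a * Re d"
  proof -
    assume h1: "Re a * (Re a * Re d - (cmod b)^2) \<ge> 0" and h2: "Re d * (Re a * Re d - (cmod b)^2) \<ge> 0"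
      and h3: "Re a + Re d - 2 * cmod b \<ge> 0"
    show ?thesis
    proof (cases "Re a > 0")
      case True thus ?thesis using h1 by (simp add: zero_le_mult_iff)
    next
      case f1: False
      show ?thesis
      proof (cases "Re d > 0")
        case True thus ?thesis using h2 by (simp add: zero_le_mult_iff)
      next
        case False
        hence "Re a = 0" "Re d = 0" using f1 qa qd by auto
        thus ?thesis using h3 by simp
      qed
    qed
  qed
  thus ?R using car h10 qa qd a_def b_def d_def by simp
next
  assume R: ?R
  hence car: "A \<in> carrier_mat 2 2" by simp
  define a where "a = Re (A$$(0,0))"
  define b where "b = A$$(0,1)"
  define d where "d = Re (A$$(1,1))"
  have A00: "A$$(0,0) = a" using R a_def by (simp add: complex_eq_iff)
  have A11: "A$$(1,1) = d" using R d_def by (simp add: complex_eq_iff)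
  have A10: "A$$(1,0) = cnj b" using R b_def by simp
  have adj: "adj2 A = A"
    by (rule eq_matI, insert car, auto simp: adj2_def less2 A00 A11[unfolded One_nat_def] A10[unfolded One_nat_def] b_def)
  have key: "\<And>s t B. a \<ge> 0 \<Longrightarrow> d \<ge> 0 \<Longrightarrow> B^2 \<le> a * d \<Longrightarrow> B \<ge> 0 \<Longrightarrow> s \<ge> 0 \<Longrightarrow> t \<ge> 0 \<Longrightarrow>
        a * s^2 + d * t^2 - 2 * B * s * t \<ge> 0"
  proof -
    fix s t B :: real assume h: "a \<ge> 0" "d \<ge> 0" "B^2 \<le> a * d" "B \<ge> 0" "s \<ge> 0" "t \<ge> 0"
    show "a * s^2 + d * t^2 - 2 * B * s * t \<ge> 0"
    proof (cases "a = 0")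
      case True
      hence "B^2 \<le> 0" using h by simp
      hence "B = 0" by simp
      thus ?thesis using h True by simp
    next
      case False
      hence "a > 0" using h by simp
      have "a * (a * s^2 + d * t^2 - 2 * B * s * t) = (a*s - B*t)^2 + (a*d - B^2) * t^2"
        by (simp add: power2_eq_square algebra_simps)
      also have "\<dots> \<ge> 0" using h by simp
      finally show ?thesis using \<open>a > 0\<close> by (simp add: zero_le_mult_iff)
    qed
  qed
  have "\<And>v. (let q = (\<Sum>i<2. \<Sum>j<2. cnj (v i) * A $$ (i,j) * v j) in Im q = 0 \<and> Re q \<ge> 0)"
  proof -
    fix v :: "nat \<Rightarrow> complex"
    define z where "z = cnj (v 0) * b * v 1"
    have qf: "(\<Sum>i<2. \<Sum>j<2. cnj (v i) * A $$ (i,j) * v j) = 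
     complex_of_real (a * (cmod (v 0))^2 + d * (cmod (v 1))^2) + (z + cnj z)"
      unfolding qform2 A00 A11 A10 z_def b_def[symmetric] cmod_power2
      by (simp add: algebra_simps power2_eq_square complex_eq_iff)
    have "z + cnj z = complex_of_real (2 * Re z)" by (simp add: complex_eq_iff)
    moreover have "\<bar>Re z\<bar> \<le> cmod b * cmod (v 0) * cmod (v 1)"
      using abs_Re_le_cmod[of z] unfolding z_def by (simp add: norm_mult mult_ac)
    moreover have "a * (cmod (v 0))^2 + d * (cmod (v 1))^2 - 2 * cmod b * cmod (v 0) * cmod (v 1) \<ge> 0"
      by (rule key, insert R a_def d_def b_def, auto)
    ultimately show "?thesis v" unfolding qf Let_def by auto
  qed
  thus ?L unfolding psd2_def using car adj by blast
qed


definition pJ :: "complex mat" where "pJ = mat 2 2 (\<lambda>_. 1)"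
definition pK :: "complex mat" where "pK = mat 2 2 (\<lambda>(i,j). if i = j then 1 else if i = 0 then - \<i> else \<i>)"
definition cJ :: "complex mat \<Rightarrow> complex" where "cJ X = (X$$(0,1) + X$$(1,0)) / 2"
definition cK :: "complex mat \<Rightarrow> complex" where "cK X = \<i> * (X$$(0,1) - X$$(1,0)) / 2"
definition c0 :: "complex mat \<Rightarrow> complex" where "c0 X = X$$(0,0) - cJ X - cK X"
definition c3 :: "complex mat \<Rightarrow> complex" where "c3 X = X$$(1,1) - cJ X - cK X"

lemma car_basis[simp]: "munit2 l \<in> carrier_mat 2 2" "pJ \<in> carrier_mat 2 2" "pK \<in> carrier_mat 2 2"
  by (auto simp: munit2_def pJ_def pK_def)

lemma psd_basis: "psd2 (munit2 0)" "psd2 (munit2 3)" "psd2 pJ" "psd2 pK"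
  by (auto simp: psd2_iff munit2_def pJ_def pK_def)

lemma decomp: assumes "X \<in> carrier_mat 2 2"
  shows "X = c0 X \<cdot>\<^sub>m munit2 0 + c3 X \<cdot>\<^sub>m munit2 3 + cJ X \<cdot>\<^sub>m pJ + cK X \<cdot>\<^sub>m pK"
  by (rule eq_matI, insert assms, auto simp: less2 munit2_def pJ_def pK_def c0_def c3_def cJ_def cK_def
     field_simps)

lemma lin4: assumes "linear_M2 F" "A \<in> carrier_mat 2 2" "B \<in> carrier_mat 2 2" "C \<in> carrier_mat 2 2" "D \<in> carrier_mat 2 2"
  shows "F (a \<cdot>\<^sub>m A + b \<cdot>\<^sub>m B + c \<cdot>\<^sub>m C + d \<cdot>\<^sub>m D) = a \<cdot>\<^sub>m F A + b \<cdot>\<^sub>m F B + c \<cdot>\<^sub>m F C + d \<cdot>\<^sub>m F D"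
proof -
  have add: "\<And>X Y. X \<in> carrier_mat 2 2 \<Longrightarrow> Y \<in> carrier_mat 2 2 \<Longrightarrow> F (X + Y) = F X + F Y"
    and sm: "\<And>X c. X \<in> carrier_mat 2 2 \<Longrightarrow> F (c \<cdot>\<^sub>m X) = c \<cdot>\<^sub>m F X"
    using assms(1) unfolding linear_M2_def by auto
  show ?thesis using assms(2-)
    by (simp add: add sm)
qed

lemma lin_car: "linear_M2 F \<Longrightarrow> X \<in> carrier_mat 2 2 \<Longrightarrow> F X \<in> carrier_mat 2 2"
  unfolding linear_M2_def by auto

lemma adj2_psd: "psd2 M \<Longrightarrow> adj2 M = M" unfolding psd2_def by auto

lemma adj2_car[simp]: "adj2 M \<in> carrier_mat 2 2" by (simp add: adj2_def)

lemma adj2_comb: assumes "A \<in> carrier_mat 2 2" "B \<in> carrier_mat 2 2" "C \<in> carrier_mat 2 2" "D \<in> carrier_mat 2 2"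
  shows "adj2 (a \<cdot>\<^sub>m A + b \<cdot>\<^sub>m B + c \<cdot>\<^sub>m C + d \<cdot>\<^sub>m D) = cnj a \<cdot>\<^sub>m adj2 A + cnj b \<cdot>\<^sub>m adj2 B + cnj c \<cdot>\<^sub>m adj2 C + cnj d \<cdot>\<^sub>m adj2 D"
  by (rule eq_matI, insert assms, auto simp: adj2_def less2)

lemma adj_decomp: assumes "X \<in> carrier_mat 2 2"
  shows "adj2 X = cnj (c0 X) \<cdot>\<^sub>m munit2 0 + cnj (c3 X) \<cdot>\<^sub>m munit2 3 + cnj (cJ X) \<cdot>\<^sub>m pJ + cnj (cK X) \<cdot>\<^sub>m pK"
proof -
  have "adj2 X = adj2 (c0 X \<cdot>\<^sub>m munit2 0 + c3 X \<cdot>\<^sub>m munit2 3 + cJ X \<cdot>\<^sub>m pJ + cK X \<cdot>\<^sub>m pK)"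
    using decomp[OF assms] by simp
  also have "\<dots> = cnj (c0 X) \<cdot>\<^sub>m munit2 0 + cnj (c3 X) \<cdot>\<^sub>m munit2 3 + cnj (cJ X) \<cdot>\<^sub>m pJ + cnj (cK X) \<cdot>\<^sub>m pK"
    by (subst adj2_comb, auto simp: adj2_psd psd_basis)
  finally show ?thesis .
qed

lemma herm_pres: assumes lin: "linear_M2 T" and pos: "positive_M2 T" and X: "X \<in> carrier_mat 2 2"
  shows "T (adj2 X) = adj2 (T X)"
proof -
  have p: "\<And>P. psd2 P \<Longrightarrow> adj2 (T P) = T P" using pos unfolding positive_M2_def by (auto intro: adj2_psd)
  have c: "\<And>P. psd2 P \<Longrightarrow> T P \<in> carrier_mat 2 2" using pos unfolding positive_M2_def psd2_def by auto
  have "T (adj2 X) = cnj (c0 X) \<cdot>\<^sub>m T (munit2 0) + cnj (c3 X) \<cdot>\<^sub>m T (munit2 3) + cnj (cJ X) \<cdot>\<^sub>m T pJ + cnj (cK X) \<cdot>\<^sub>m T pK"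
    unfolding adj_decomp[OF X] by (rule lin4[OF lin], auto)
  also have "\<dots> = adj2 (c0 X \<cdot>\<^sub>m T (munit2 0) + c3 X \<cdot>\<^sub>m T (munit2 3) + cJ X \<cdot>\<^sub>m T pJ + cK X \<cdot>\<^sub>m T pK)"
    by (subst adj2_comb, auto simp: c p psd_basis)
  also have "c0 X \<cdot>\<^sub>m T (munit2 0) + c3 X \<cdot>\<^sub>m T (munit2 3) + cJ X \<cdot>\<^sub>m T pJ + cK X \<cdot>\<^sub>m T pK = T X"
    by (subst (2) decomp[OF X], rule lin4[OF lin, symmetric], auto)
  finally show ?thesis .
qed

lemma lin_comp: assumes F: "linear_M2 F" and G: "linear_M2 G" shows "linear_M2 (\<lambda>X. F (G X))"
proof -
  have a: "\<And>X Y. X \<in> carrier_mat 2 2 \<Longrightarrow> Y \<in> carrier_mat 2 2 \<Longrightarrow> F (X + Y) = F X + F Y"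
    and s: "\<And>X c. X \<in> carrier_mat 2 2 \<Longrightarrow> F (c \<cdot>\<^sub>m X) = c \<cdot>\<^sub>m F X"
    and a': "\<And>X Y. X \<in> carrier_mat 2 2 \<Longrightarrow> Y \<in> carrier_mat 2 2 \<Longrightarrow> G (X + Y) = G X + G Y"
    and s': "\<And>X c. X \<in> carrier_mat 2 2 \<Longrightarrow> G (c \<cdot>\<^sub>m X) = c \<cdot>\<^sub>m G X"
    using F G unfolding linear_M2_def by auto
  show ?thesis unfolding linear_M2_def
    using lin_car[OF F] lin_car[OF G] a s a' s' by auto
qed

lemma lin_pow: "linear_M2 T \<Longrightarrow> linear_M2 (T ^^ n)"
proof (induction n)
  case 0 show ?case unfolding linear_M2_def by auto
next
  case (Suc n)
  have "linear_M2 (\<lambda>X. T ((T^^n) X))" by (rule lin_comp[OF Suc(2) Suc(1)[OF Suc(2)]])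
  thus ?case by (simp add: comp_def)
qed

lemma pos_pow: assumes "positive_M2 T" shows "positive_M2 (T ^^ n)"
proof (induction n)
  case 0 show ?case unfolding positive_M2_def by auto
next
  case (Suc n) thus ?case using assms unfolding positive_M2_def by auto
qed

lemma tp_pow: "linear_M2 T \<Longrightarrow> trace_preserving_M2 T \<Longrightarrow> trace_preserving_M2 (T ^^ n)"
proof (induction n)
  case 0 show ?case unfolding trace_preserving_M2_def by auto
next
  case (Suc n)
  have "linear_M2 (T^^n)" by (rule lin_pow[OF Suc(2)])
  thus ?case using Suc unfolding trace_preserving_M2_def by (simp add: lin_car)
qed

lemma psd_entry_bound: assumes "psd2 M" "i < 2" "j < 2"
  shows "cmod (M$$(i,j)) \<le> Re (tr2 M)"
proof -
  from assms(1)[unfolded psd2_iff] have h: "M$$(1,0) = cnj (M$$(0,1))" "Im (M$$(0,0)) = 0" "Im (M$$(1,1)) = 0"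
    "Re (M$$(0,0)) \<ge> 0" "Re (M$$(1,1)) \<ge> 0" "(cmod (M$$(0,1)))^2 \<le> Re (M$$(0,0)) * Re (M$$(1,1))" by auto
  have d0: "cmod (M$$(0,0)) = Re (M$$(0,0))" using h by (simp add: cmod_def)
  have d1: "cmod (M$$(1,1)) = Re (M$$(1,1))" using h by (simp add: cmod_def)
  have "(cmod (M$$(0,1)))^2 \<le> (Re (M$$(0,0)) + Re (M$$(1,1)))^2"
  proof -
    let ?a = "Re (M$$(0,0))" and ?d = "Re (M$$(1,1))"
    have e: "(?a + ?d)^2 = ?a * ?a + 2 * (?a * ?d) + ?d * ?d" by (simp add: power2_eq_square algebra_simps)
    have "0 \<le> ?a * ?a + ?a * ?d + ?d * ?d" using h(4,5) by (intro add_nonneg_nonneg mult_nonneg_nonneg) auto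
    with e h(6) show ?thesis by linarith
  qed
  hence o: "cmod (M$$(0,1)) \<le> Re (M$$(0,0)) + Re (M$$(1,1))"
    by (rule power2_le_imp_le) (insert h(4,5), linarith)
  have o2: "cmod (M$$(1,0)) \<le> Re (M$$(0,0)) + Re (M$$(1,1))" using o h(1) by simp
  show ?thesis using assms(2,3) d0 d1 o o2 h(4,5) unfolding less2 tr2_def by auto
qed

lemma norm4: "cmod (a+b+c+d) \<le> cmod a + cmod b + cmod c + cmod (d::complex)"
proof -
  have "cmod (a+b+c+d) \<le> cmod (a+b+c) + cmod d" by (rule norm_triangle_ineq)
  moreover have "cmod (a+b+c) \<le> cmod (a+b) + cmod c" by (rule norm_triangle_ineq)
  moreover have "cmod (a+b) \<le> cmod a + cmod b" by (rule norm_triangle_ineq)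
  ultimately show ?thesis by linarith
qed

lemma idx4: assumes "A \<in> carrier_mat 2 2" "B \<in> carrier_mat 2 2" "C \<in> carrier_mat 2 2" "D \<in> carrier_mat 2 2" "i < 2" "j < 2"
  shows "(a \<cdot>\<^sub>m A + b \<cdot>\<^sub>m B + c \<cdot>\<^sub>m C + d \<cdot>\<^sub>m D) $$ (i,j) = a * A $$ (i,j) + b * B $$ (i,j) + c * C $$ (i,j) + d * D $$ (i,j)"
  using assms by (auto simp: carrier_matD)

lemma smult_smult_mat2: "a \<cdot>\<^sub>m (b \<cdot>\<^sub>m A) = (a * b) \<cdot>\<^sub>m (A :: complex mat)"
  by (rule eq_matI) auto

lemma eig_bound: assumes lin: "linear_M2 T" and pos: "positive_M2 T" and tp: "trace_preserving_M2 T"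
  and X: "X \<in> carrier_mat 2 2" and eig: "T X = z \<cdot>\<^sub>m X" and i: "i < 2" and j: "j < 2" and nz: "X$$(i,j) \<noteq> 0"
  shows "cmod z \<le> 1"
proof (rule ccontr)
  assume "\<not> cmod z \<le> 1"
  hence z1: "cmod z > 1" by simp
  define C where "C = cmod (c0 X) + cmod (c3 X) + 2 * cmod (cJ X) + 2 * cmod (cK X)"
  have pw: "(T^^n) X = z^n \<cdot>\<^sub>m X" for n
  proof (induction n)
    case 0 thus ?case by (rule eq_matI, insert X, auto)
  next
    case (Suc n)
    have "(T^^Suc n) X = T (z^n \<cdot>\<^sub>m X)" using Suc by simp
    also have "\<dots> = z^n \<cdot>\<^sub>m T X" using lin X unfolding linear_M2_def by auto
    also have "\<dots> = z^Suc n \<cdot>\<^sub>m X" unfolding eig smult_smult_mat2 by (simp add: mult.commute)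
    finally show ?case .
  qed
  have bnd: "cmod z ^ n * cmod (X$$(i,j)) \<le> C" for n
  proof -
    let ?S = "T^^n"
    have ln: "linear_M2 ?S" by (rule lin_pow[OF lin])
    have pn: "\<And>P. psd2 P \<Longrightarrow> psd2 (?S P)" using pos_pow[OF pos, of n] unfolding positive_M2_def by auto
    have tn: "\<And>P. P \<in> carrier_mat 2 2 \<Longrightarrow> tr2 (?S P) = tr2 P" using tp_pow[OF lin tp, of n] unfolding trace_preserving_M2_def by auto
    have cn: "\<And>P. psd2 P \<Longrightarrow> ?S P \<in> carrier_mat 2 2" using pn unfolding psd2_def by auto
    have eb: "\<And>P. psd2 P \<Longrightarrow> cmod (?S P $$ (i,j)) \<le> Re (tr2 P)"
      using psd_entry_bound[OF pn i j] tn unfolding psd2_def by auto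
    have "?S X = c0 X \<cdot>\<^sub>m ?S (munit2 0) + c3 X \<cdot>\<^sub>m ?S (munit2 3) + cJ X \<cdot>\<^sub>m ?S pJ + cK X \<cdot>\<^sub>m ?S pK"
      by (subst decomp[OF X], rule lin4[OF ln], auto)
    note eqS = this
    have "?S X $$ (i,j) = c0 X * ?S (munit2 0) $$ (i,j) + c3 X * ?S (munit2 3) $$ (i,j) + cJ X * ?S pJ $$ (i,j) + cK X * ?S pK $$ (i,j)"
      unfolding eqS by (rule idx4[OF cn cn cn cn i j], auto simp: psd_basis)
    hence "cmod (z^n * X$$(i,j)) = cmod (c0 X * ?S (munit2 0) $$ (i,j) + c3 X * ?S (munit2 3) $$ (i,j) + cJ X * ?S pJ $$ (i,j) + cK X * ?S pK $$ (i,j))"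
      using pw[of n] i j X by simp
    also have "\<dots> \<le> cmod (c0 X) * cmod (?S (munit2 0) $$ (i,j)) + cmod (c3 X) * cmod (?S (munit2 3) $$ (i,j)) + cmod (cJ X) * cmod (?S pJ $$ (i,j)) + cmod (cK X) * cmod (?S pK $$ (i,j))"
      by (rule order_trans[OF norm4], simp add: norm_mult)
    also have "\<dots> \<le> cmod (c0 X) * 1 + cmod (c3 X) * 1 + cmod (cJ X) * 2 + cmod (cK X) * 2"
    proof -
      have t: "Re (tr2 (munit2 0)) = 1" "Re (tr2 (munit2 3)) = 1" "Re (tr2 pJ) = 2" "Re (tr2 pK) = 2"
        by (auto simp: tr2_def munit2_def pJ_def pK_def)
      show ?thesis using eb[OF psd_basis(1)] eb[OF psd_basis(2)] eb[OF psd_basis(3)] eb[OF psd_basis(4)]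
        unfolding t by (intro add_mono mult_left_mono) auto
    qed
    finally show ?thesis unfolding C_def by (simp add: norm_mult norm_power)
  qed
  obtain n where "C / cmod (X$$(i,j)) < cmod z ^ n" using real_arch_pow[OF z1] by blast
  hence "C < cmod z ^ n * cmod (X$$(i,j))" using nz by (simp add: divide_simps)
  with bnd[of n] show False by simp
qed


lemma sum4: "(\<Sum>i<4. f i) = f 0 + f 1 + f 2 + f (3::nat)"
  by (simp add: eval_nat_numeral add.assoc)
lemma sum4': "(\<Sum>i\<in>{0..<4}. f i) = f 0 + f 1 + f 2 + f (3::nat)"
  by (simp add: eval_nat_numeral add.assoc atLeast0LessThan)
lemma less4: "(l::nat) < 4 \<longleftrightarrow> l = 0 \<or> l = 1 \<or> l = 2 \<or> l = 3" by auto

lemma opmat_car[simp]: "op_mat T \<in> carrier_mat 4 4" by (simp add: op_mat_def)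
lemma opmat_dim[simp]: "dim_row (op_mat T) = 4" "dim_col (op_mat T) = 4" by (simp_all add: op_mat_def)
lemma opmat_idx: "k < 4 \<Longrightarrow> l < 4 \<Longrightarrow> op_mat T $$ (k,l) = T (munit2 l) $$ (k div 2, k mod 2)"
  by (simp add: op_mat_def)

lemma cp_nz: "char_poly (op_mat T) \<noteq> 0"
proof -
  have "degree (char_poly (op_mat T)) = 4 \<and> coeff (char_poly (op_mat T)) 4 = 1"
    by (rule degree_monic_char_poly, simp)
  thus ?thesis by auto
qed

lemma in_spec: "z \<in># spec_M2 T \<longleftrightarrow> poly (char_poly (op_mat T)) z = 0"
  unfolding spec_M2_def using cp_nz by simp

lemma spec_eigen: "z \<in># spec_M2 T \<longleftrightarrow> eigenvalue (op_mat T) z"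
  unfolding in_spec using eigenvalue_root_char_poly[OF opmat_car] by simp

lemma tr_munit: assumes "l < 4" shows "tr2 (munit2 l) = (if l = 0 \<or> l = 3 then 1 else 0)"
proof -
  have "l = 0 \<or> l = 1 \<or> l = 2 \<or> l = 3" using assms by auto
  thus ?thesis by (elim disjE) (simp_all add: tr2_def munit2_def)
qed

lemma one_in_spec: assumes tp: "trace_preserving_M2 T" shows "1 \<in># spec_M2 T"
proof -
  let ?A = "op_mat T"
  define w :: "complex vec" where "w = vec 4 (\<lambda>k. if k = 0 \<or> k = 3 then 1 else 0)"
  have tr: "\<And>l. l < 4 \<Longrightarrow> T (munit2 l) $$ (0,0) + T (munit2 l) $$ (1,1) = (if l = 0 \<or> l = 3 then 1 else 0)"
  proof -
    fix l :: nat assume l: "l < 4"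
    have "tr2 (T (munit2 l)) = tr2 (munit2 l)" using tp unfolding trace_preserving_M2_def by simp
    also have "\<dots> = (if l = 0 \<or> l = 3 then 1 else 0)" using l by (rule tr_munit)
    finally show "?thesis l" unfolding tr2_def .
  qed
  have "transpose_mat ?A *\<^sub>v w = 1 \<cdot>\<^sub>v w"
  proof (rule eq_vecI)
    fix l assume "l < dim_vec (1 \<cdot>\<^sub>v w)"
    hence l: "l < 4" by (simp add: w_def)
    have "(transpose_mat ?A *\<^sub>v w) $ l = ?A $$ (0,l) + ?A $$ (3,l)"
    proof -
      have wv: "w $ 0 = 1" "w $ 1 = 0" "w $ 2 = 0" "w $ 3 = 1" "dim_vec w = 4" by (simp_all add: w_def)
      have "(transpose_mat ?A *\<^sub>v w) $ l = row (transpose_mat ?A) l \<bullet> w" using l by simp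
      also have "\<dots> = (\<Sum>i\<in>{0..<4}. row (transpose_mat ?A) l $ i * w $ i)" unfolding scalar_prod_def wv ..
      also have "\<dots> = ?A $$ (0,l) + ?A $$ (3,l)" unfolding sum4' using l wv(1-4)[unfolded One_nat_def numeral_2_eq_2 numeral_3_eq_3] wv(1-4) by simp
      finally show ?thesis .
    qed
    also have "\<dots> = T (munit2 l) $$ (0,0) + T (munit2 l) $$ (1,1)" using l by (simp add: opmat_idx)
    also have "\<dots> = (1 \<cdot>\<^sub>v w) $ l" using tr[OF l] l by (simp add: w_def)
    finally show "(transpose_mat ?A *\<^sub>v w) $ l = (1 \<cdot>\<^sub>v w) $ l" .
  qed (simp add: w_def)
  moreover have "w \<noteq> 0\<^sub>v 4"
  proof
    assume "w = 0\<^sub>v 4"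
    hence "w $ 0 = 0\<^sub>v 4 $ 0" by simp
    thus False by (simp add: w_def)
  qed
  ultimately have "eigenvector (transpose_mat ?A) w 1" unfolding eigenvector_def by (simp add: w_def)
  hence "eigenvalue (transpose_mat ?A) 1" unfolding eigenvalue_def by blast
  hence "poly (char_poly (transpose_mat ?A)) 1 = 0"
    using eigenvalue_root_char_poly[of "transpose_mat ?A" 4] by simp
  thus ?thesis unfolding in_spec using char_poly_transpose_mat[OF opmat_car] by simp
qed


lemma vec_decomp: assumes v: "v \<in> carrier_vec 4"
  shows "mat 2 2 (\<lambda>(i,j). v $ (2*i+j)) = v$0 \<cdot>\<^sub>m munit2 0 + v$1 \<cdot>\<^sub>m munit2 1 + v$2 \<cdot>\<^sub>m munit2 2 + v$3 \<cdot>\<^sub>m munit2 3"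
  by (rule eq_matI, auto simp: less2 munit2_def)

lemma opmat_eig: assumes lin: "linear_M2 T" and v: "v \<in> carrier_vec 4" and ev: "op_mat T *\<^sub>v v = z \<cdot>\<^sub>v v"
  shows "T (mat 2 2 (\<lambda>(i,j). v $ (2*i+j))) = z \<cdot>\<^sub>m mat 2 2 (\<lambda>(i,j). v $ (2*i+j))"
proof -
  have e: "\<And>k. k < 4 \<Longrightarrow> (\<Sum>l<4. T (munit2 l) $$ (k div 2, k mod 2) * v $ l) = z * v $ k"
  proof -
    fix k :: nat assume k: "k < 4"
    have "(op_mat T *\<^sub>v v) $ k = (z \<cdot>\<^sub>v v) $ k" using ev by simp
    moreover have "(op_mat T *\<^sub>v v) $ k = (\<Sum>l<4. T (munit2 l) $$ (k div 2, k mod 2) * v $ l)"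
      using k v by (simp add: scalar_prod_def atLeast0LessThan sum4 opmat_idx carrier_vecD)
    ultimately show "?thesis k" using k v by simp
  qed
  have "T (mat 2 2 (\<lambda>(i,j). v $ (2*i+j))) = v$0 \<cdot>\<^sub>m T (munit2 0) + v$1 \<cdot>\<^sub>m T (munit2 1) + v$2 \<cdot>\<^sub>m T (munit2 2) + v$3 \<cdot>\<^sub>m T (munit2 3)"
    unfolding vec_decomp[OF v] by (rule lin4[OF lin], auto)
  also have "\<dots> = z \<cdot>\<^sub>m mat 2 2 (\<lambda>(i,j). v $ (2*i+j))"
  proof (rule eq_matI)
    fix i j assume "i < dim_row (z \<cdot>\<^sub>m mat 2 2 (\<lambda>(i,j). v $ (2*i+j)))" "j < dim_col (z \<cdot>\<^sub>m mat 2 2 (\<lambda>(i,j). v $ (2*i+j)))"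
    hence i: "i < 2" and j: "j < 2" by auto
    have c: "\<And>l. T (munit2 l) \<in> carrier_mat 2 2" using lin_car[OF lin] by simp
    have "(v$0 \<cdot>\<^sub>m T (munit2 0) + v$1 \<cdot>\<^sub>m T (munit2 1) + v$2 \<cdot>\<^sub>m T (munit2 2) + v$3 \<cdot>\<^sub>m T (munit2 3)) $$ (i,j)
      = v$0 * T (munit2 0) $$ (i,j) + v$1 * T (munit2 1) $$ (i,j) + v$2 * T (munit2 2) $$ (i,j) + v$3 * T (munit2 3) $$ (i,j)"
      by (rule idx4[OF c c c c i j])
    also have "\<dots> = z * v $ (2*i+j)"
    proof -
      have k: "2*i+j < 4" using i j by simp
      have dm: "(2*i+j) div 2 = i" "(2*i+j) mod 2 = j" using i j by auto
      show ?thesis using e[OF k] unfolding sum4 dm by (simp add: mult.commute)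
    qed
    also have "\<dots> = (z \<cdot>\<^sub>m mat 2 2 (\<lambda>(i,j). v $ (2*i+j))) $$ (i,j)" using i j by simp
    finally show "(v$0 \<cdot>\<^sub>m T (munit2 0) + v$1 \<cdot>\<^sub>m T (munit2 1) + v$2 \<cdot>\<^sub>m T (munit2 2) + v$3 \<cdot>\<^sub>m T (munit2 3)) $$ (i,j) = (z \<cdot>\<^sub>m mat 2 2 (\<lambda>(i,j). v $ (2*i+j))) $$ (i,j)" .
  next
    have d: "dim_row (T (munit2 3)) = 2" "dim_col (T (munit2 3)) = 2"
      using carrier_matD[OF lin_car[OF lin, of "munit2 3"]] by auto
    show "dim_row (v$0 \<cdot>\<^sub>m T (munit2 0) + v$1 \<cdot>\<^sub>m T (munit2 1) + v$2 \<cdot>\<^sub>m T (munit2 2) + v$3 \<cdot>\<^sub>m T (munit2 3)) = dim_row (z \<cdot>\<^sub>m mat 2 2 (\<lambda>(i,j). v $ (2*i+j)))"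
      using d by simp
    show "dim_col (v$0 \<cdot>\<^sub>m T (munit2 0) + v$1 \<cdot>\<^sub>m T (munit2 1) + v$2 \<cdot>\<^sub>m T (munit2 2) + v$3 \<cdot>\<^sub>m T (munit2 3)) = dim_col (z \<cdot>\<^sub>m mat 2 2 (\<lambda>(i,j). v $ (2*i+j)))"
      using d by simp
  qed
  finally show ?thesis .
qed

lemma spec_bound: assumes lin: "linear_M2 T" and pos: "positive_M2 T" and tp: "trace_preserving_M2 T"
  and z: "z \<in># spec_M2 T" shows "cmod z \<le> 1"
proof -
  from z[unfolded spec_eigen] obtain v where "eigenvector (op_mat T) v z" unfolding eigenvalue_def by blast
  hence v: "v \<in> carrier_vec 4" and nz: "v \<noteq> 0\<^sub>v 4" and ev: "op_mat T *\<^sub>v v = z \<cdot>\<^sub>v v"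
    unfolding eigenvector_def by auto
  obtain l where l: "l < 4" and vl: "v $ l \<noteq> 0"
  proof (rule ccontr)
    assume "\<not> thesis"
    hence "\<And>l. l < 4 \<Longrightarrow> v $ l = 0" using that by blast
    hence "v = 0\<^sub>v 4" using v by (intro eq_vecI) auto
    with nz show False by simp
  qed
  define X where "X = mat 2 2 (\<lambda>(i,j). v $ (2*i+j))"
  have ld: "l div 2 < 2" "l mod 2 < 2" using l by auto
  have "X $$ (l div 2, l mod 2) = v $ (2 * (l div 2) + l mod 2)" unfolding X_def using ld by simp
  also have "2 * (l div 2) + l mod 2 = l" by simp
  finally have "X $$ (l div 2, l mod 2) \<noteq> 0" using vl by simp
  moreover have "T X = z \<cdot>\<^sub>m X" unfolding X_def by (rule opmat_eig[OF lin v ev])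
  ultimately show ?thesis using l
    by (intro eig_bound[OF lin pos tp _ _ _ _ \<open>X $$ (l div 2, l mod 2) \<noteq> 0\<close>]) (auto simp: X_def)
qed


definition sw :: "nat \<Rightarrow> nat" where "sw k = (if k = 1 then 2 else if k = 2 then 1 else k)"
definition Pm :: "complex mat" where "Pm = mat 4 4 (\<lambda>(i,j). if j = sw i then 1 else 0)"

lemma sw_divmod: assumes "k < 4" shows "sw k mod 2 = k div 2" "sw k div 2 = k mod 2" "sw k < 4"
proof -
  have "k = 0 \<or> k = 1 \<or> k = 2 \<or> k = 3" using assms by auto
  thus "sw k mod 2 = k div 2" "sw k div 2 = k mod 2" "sw k < 4" by (elim disjE; simp add: sw_def)+
qed

lemma munit_sw: assumes "l < 4" shows "munit2 (sw l) = adj2 (munit2 l)"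
  by (rule eq_matI) (auto simp: munit2_def adj2_def sw_divmod[OF assms])

lemma herm_op: assumes lin: "linear_M2 T" and pos: "positive_M2 T" and k: "k < 4" and l: "l < 4"
  shows "op_mat T $$ (sw k, sw l) = cnj (op_mat T $$ (k,l))"
proof -
  have skl: "sw k < 4" "sw l < 4" using k l by (auto simp: sw_divmod)
  have "op_mat T $$ (sw k, sw l) = T (munit2 (sw l)) $$ (sw k div 2, sw k mod 2)" using skl by (simp add: opmat_idx)
  also have "T (munit2 (sw l)) = adj2 (T (munit2 l))" unfolding munit_sw[OF l] by (rule herm_pres[OF lin pos], simp)
  also have "adj2 (T (munit2 l)) $$ (sw k div 2, sw k mod 2) = cnj (T (munit2 l) $$ (sw k mod 2, sw k div 2))"
    using skl unfolding adj2_def by simp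
  finally show ?thesis using k l sw_divmod[OF k] by (simp add: opmat_idx)
qed

lemma Pm_car[simp]: "Pm \<in> carrier_mat 4 4" by (simp add: Pm_def)
lemma Pm_dim[simp]: "dim_row Pm = 4" "dim_col Pm = 4" by (simp_all add: Pm_def)

lemma Pm_idx: "i < 4 \<Longrightarrow> j < 4 \<Longrightarrow> Pm $$ (i,j) = (if j = sw i then 1 else 0)" by (simp add: Pm_def)

lemma Pm_mult: assumes A: "A \<in> carrier_mat 4 4" and k: "k < 4" and m: "m < 4"
  shows "(Pm * A) $$ (k,m) = A $$ (sw k, m)"
proof -
  have "(Pm * A) $$ (k,m) = (\<Sum>i\<in>{0..<4}. Pm $$ (k,i) * A $$ (i,m))"
    using carrier_matD[OF A] k m by (simp add: scalar_prod_def)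
  also have "\<dots> = A $$ (sw k, m)" unfolding sum4'
  proof -
    have "k = 0 \<or> k = 1 \<or> k = 2 \<or> k = 3" using k by auto
    thus "Pm $$ (k, 0) * A $$ (0, m) + Pm $$ (k, 1) * A $$ (1, m) + Pm $$ (k, 2) * A $$ (2, m) + Pm $$ (k, 3) * A $$ (3, m) = A $$ (sw k, m)"
      by (elim disjE) (simp_all add: Pm_idx sw_def)
  qed
  finally show ?thesis .
qed

lemma mult_Pm: assumes A: "A \<in> carrier_mat 4 4" and k: "k < 4" and m: "m < 4"
  shows "(A * Pm) $$ (k,m) = A $$ (k, sw m)"
proof -
  have "(A * Pm) $$ (k,m) = (\<Sum>i\<in>{0..<4}. A $$ (k,i) * Pm $$ (i,m))"
    using carrier_matD[OF A] k m by (simp add: scalar_prod_def)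
  also have "\<dots> = A $$ (k, sw m)" unfolding sum4'
  proof -
    have "m = 0 \<or> m = 1 \<or> m = 2 \<or> m = 3" using m by auto
    thus "A $$ (k, 0) * Pm $$ (0, m) + A $$ (k, 1) * Pm $$ (1, m) + A $$ (k, 2) * Pm $$ (2, m) + A $$ (k, 3) * Pm $$ (3, m) = A $$ (k, sw m)"
      by (elim disjE) (simp_all add: Pm_idx sw_def)
  qed
  finally show ?thesis .
qed

lemma Pm_Pm: "Pm * Pm = 1\<^sub>m 4"
proof (rule eq_matI)
  fix i j assume "i < dim_row (1\<^sub>m 4 :: complex mat)" "j < dim_col (1\<^sub>m 4 :: complex mat)"
  hence i: "i < 4" and j: "j < 4" by auto
  have "(Pm * Pm) $$ (i,j) = Pm $$ (sw i, j)" by (rule Pm_mult[OF Pm_car i j])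
  also have "\<dots> = (if j = sw (sw i) then 1 else 0)" using i j sw_divmod(3)[OF i] by (simp add: Pm_idx)
  also have "sw (sw i) = i" by (simp add: sw_def)
  finally show "(Pm * Pm) $$ (i,j) = 1\<^sub>m 4 $$ (i,j)" using i j by simp
qed auto

lemma conj_sim: assumes lin: "linear_M2 T" and pos: "positive_M2 T"
  shows "map_mat cnj (op_mat T) = Pm * op_mat T * Pm"
proof (rule eq_matI)
  fix k l assume "k < dim_row (Pm * op_mat T * Pm)" "l < dim_col (Pm * op_mat T * Pm)"
  hence k: "k < 4" and l: "l < 4" by auto
  have PA: "Pm * op_mat T \<in> carrier_mat 4 4" by (metis mult_carrier_mat Pm_car opmat_car)
  have "(Pm * op_mat T * Pm) $$ (k,l) = (Pm * op_mat T) $$ (k, sw l)"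
    using mult_Pm[OF PA k l] .
  also have "\<dots> = op_mat T $$ (sw k, sw l)" by (rule Pm_mult[OF _ k sw_divmod(3)[OF l]], simp)
  also have "\<dots> = cnj (op_mat T $$ (k,l))" by (rule herm_op[OF lin pos k l])
  finally show "map_mat cnj (op_mat T) $$ (k,l) = (Pm * op_mat T * Pm) $$ (k,l)" using k l by simp
qed auto

interpretation cnj_hom: comm_ring_hom cnj
  by unfold_locales auto

lemma proots_lin: "proots (\<Prod>a\<leftarrow>as. [:-a, 1:]) = mset (as :: complex list)"
proof (induction as)
  case Nil thus ?case by simp
next
  case (Cons a as)
  have nz: "(\<Prod>a\<leftarrow>as. [:-a, 1:]) \<noteq> (0 :: complex poly)" by (auto simp: prod_list_zero_iff)
  have "proots (\<Prod>a\<leftarrow>a#as. [:-a, 1:]) = proots ([:-a, 1:] * (\<Prod>a\<leftarrow>as. [:-a, 1:]))" by simp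
  also have "\<dots> = proots [:-a, 1:] + proots (\<Prod>a\<leftarrow>as. [:-a, 1:])" by (rule proots_mult[OF _ nz], simp)
  finally show ?case using Cons by simp
qed

lemma map_cnj_lin: "map_poly cnj (\<Prod>a\<leftarrow>as. [:-a, 1:]) = (\<Prod>a\<leftarrow>as. [:- cnj a, 1:])"
proof (induction as)
  case Nil thus ?case by simp
next
  case (Cons a as)
  interpret mp: map_poly_comm_ring_hom cnj ..
  have "map_poly cnj (\<Prod>a\<leftarrow>a#as. [:-a, 1:]) = map_poly cnj ([:-a, 1:] * (\<Prod>a\<leftarrow>as. [:-a, 1:]))" by simp
  also have "\<dots> = map_poly cnj [:-a, 1:] * map_poly cnj (\<Prod>a\<leftarrow>as. [:-a, 1:])" by (rule mp.hom_mult)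
  also have "map_poly cnj [:-a, 1:] = [:-cnj a, 1:]" by simp
  finally show ?case using Cons by simp
qed

lemma conj_spec: assumes lin: "linear_M2 T" and pos: "positive_M2 T"
  shows "image_mset cnj (spec_M2 T) = spec_M2 T"
proof -
  let ?A = "op_mat T"
  have "similar_mat (map_mat cnj ?A) ?A"
  proof (rule similar_matI[of _ _ Pm Pm 4])
    have "Pm * ?A * Pm \<in> carrier_mat 4 4" by (metis mult_carrier_mat Pm_car opmat_car)
    thus "{map_mat cnj ?A, ?A, Pm, Pm} \<subseteq> carrier_mat 4 4" by simp
  qed (auto simp: Pm_Pm conj_sim[OF lin pos])
  hence e1: "char_poly (map_mat cnj ?A) = char_poly ?A" by (rule char_poly_similar)
  have e2: "char_poly (map_mat cnj ?A) = map_poly cnj (char_poly ?A)" using cnj_hom.char_poly_hom[OF opmat_car] by simp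
  obtain as where as: "char_poly ?A = (\<Prod>a\<leftarrow>as. [:-a, 1:])" using char_poly_factorized[OF opmat_car] by blast
  have "mset as = proots (char_poly ?A)" unfolding as proots_lin ..
  also have "\<dots> = proots (map_poly cnj (char_poly ?A))" using e1 e2 by simp
  also have "\<dots> = mset (map cnj as)" unfolding as map_cnj_lin
    using proots_lin[of "map cnj as"] by (simp add: o_def)
  finally have "mset as = image_mset cnj (mset as)" by simp
  thus ?thesis unfolding spec_M2_def as proots_lin by simp
qed


lemma det_row0: assumes "(A :: 'a :: comm_ring_1 mat) \<in> carrier_mat (Suc n) (Suc n)"
  shows "det A = (\<Sum>j<Suc n. A $$ (0,j) * ((-1)^j * det (mat_delete A 0 j)))"
  using laplace_expansion_row[OF assms, of 0] unfolding cofactor_def by simp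

lemma sumS2: "(\<Sum>j<Suc 1. f j) = f 0 + f (1::nat)" by simp
lemma sumS3: "(\<Sum>j<Suc 2. f j) = f 0 + f 1 + f (2::nat)" by (simp add: eval_nat_numeral)
lemma sumS4: "(\<Sum>j<Suc 3. f j) = f 0 + f 1 + f 2 + f (3::nat)" by (simp add: eval_nat_numeral)

lemma det1: assumes "(A :: 'a :: comm_ring_1 mat) \<in> carrier_mat 1 1" shows "det A = A $$ (0,0)"
proof -
  have "det A = (\<Sum>j<Suc 0. A $$ (0,j) * ((-1)^j * det (mat_delete A 0 j)))"
    by (rule det_row0, insert assms, simp)
  also have "\<dots> = A $$ (0,0) * det (mat_delete A 0 0)" by simp
  also have "det (mat_delete A 0 0) = 1" using mat_delete_carrier[OF assms] by simp
  finally show ?thesis by simp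
qed

lemma det2: assumes "(A :: 'a :: comm_ring_1 mat) \<in> carrier_mat 2 2"
  shows "det A = A $$ (0,0) * A $$ (1,1) - A $$ (0,1) * A $$ (1,0)"
proof -
  have A: "A \<in> carrier_mat (Suc 1) (Suc 1)" using assms by (simp add: numeral_2_eq_2)
  have c: "\<And>j. mat_delete A 0 j \<in> carrier_mat 1 1" using mat_delete_carrier[OF assms] by simp
  show ?thesis unfolding det_row0[OF A] sumS2 det1[OF c] using assms
    by (simp add: mat_delete_def)
qed

lemma det3: assumes "(A :: 'a :: comm_ring_1 mat) \<in> carrier_mat 3 3"
  shows "det A = A $$ (0,0) * (A $$ (1,1) * A $$ (2,2) - A $$ (1,2) * A $$ (2,1))
               - A $$ (0,1) * (A $$ (1,0) * A $$ (2,2) - A $$ (1,2) * A $$ (2,0))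
               + A $$ (0,2) * (A $$ (1,0) * A $$ (2,1) - A $$ (1,1) * A $$ (2,0))"
proof -
  have A: "A \<in> carrier_mat (Suc 2) (Suc 2)" using assms by (simp add: numeral_3_eq_3)
  have c: "\<And>j. mat_delete A 0 j \<in> carrier_mat 2 2" using mat_delete_carrier[OF assms] by simp
  show ?thesis unfolding det_row0[OF A] sumS3 det2[OF c] using assms
    by (simp add: mat_delete_def algebra_simps eval_nat_numeral)
qed

lemma det4: assumes "(A :: 'a :: comm_ring_1 mat) \<in> carrier_mat 4 4"
  shows "det A =
   A$$(0,0) * (A$$(1,1) * (A$$(2,2) * A$$(3,3) - A$$(2,3) * A$$(3,2)) - A$$(1,2) * (A$$(2,1) * A$$(3,3) - A$$(2,3) * A$$(3,1)) + A$$(1,3) * (A$$(2,1) * A$$(3,2) - A$$(2,2) * A$$(3,1)))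
 - A$$(0,1) * (A$$(1,0) * (A$$(2,2) * A$$(3,3) - A$$(2,3) * A$$(3,2)) - A$$(1,2) * (A$$(2,0) * A$$(3,3) - A$$(2,3) * A$$(3,0)) + A$$(1,3) * (A$$(2,0) * A$$(3,2) - A$$(2,2) * A$$(3,0)))
 + A$$(0,2) * (A$$(1,0) * (A$$(2,1) * A$$(3,3) - A$$(2,3) * A$$(3,1)) - A$$(1,1) * (A$$(2,0) * A$$(3,3) - A$$(2,3) * A$$(3,0)) + A$$(1,3) * (A$$(2,0) * A$$(3,1) - A$$(2,1) * A$$(3,0)))
 - A$$(0,3) * (A$$(1,0) * (A$$(2,1) * A$$(3,2) - A$$(2,2) * A$$(3,1)) - A$$(1,1) * (A$$(2,0) * A$$(3,2) - A$$(2,2) * A$$(3,0)) + A$$(1,2) * (A$$(2,0) * A$$(3,1) - A$$(2,1) * A$$(3,0)))"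
proof -
  have A: "A \<in> carrier_mat (Suc 3) (Suc 3)" using assms by (simp add: eval_nat_numeral)
  have c: "\<And>j. mat_delete A 0 j \<in> carrier_mat 3 3" using mat_delete_carrier[OF assms] by simp
  show ?thesis unfolding det_row0[OF A] sumS4 det3[OF c] using assms
    by (simp add: mat_delete_def eval_nat_numeral algebra_simps)
qed


definition Tm :: "complex \<Rightarrow> complex \<Rightarrow> complex \<Rightarrow> complex mat \<Rightarrow> complex mat" where
 "Tm \<alpha> u w X = mat 2 2 (\<lambda>(i,j). if i = 0 \<and> j = 0 then \<alpha> * X$$(0,0) + (1-\<alpha>) * X$$(1,1)
   else if i = 0 then u * X$$(0,1) + cnj w * X$$(1,0)
   else if j = 0 then w * X$$(0,1) + cnj u * X$$(1,0)
   else (1-\<alpha>) * X$$(0,0) + \<alpha> * X$$(1,1))"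

lemma Tm_car[simp]: "Tm \<alpha> u w X \<in> carrier_mat 2 2" by (simp add: Tm_def)
lemma Tm_idx: "Tm \<alpha> u w X $$ (0,0) = \<alpha> * X$$(0,0) + (1-\<alpha>) * X$$(1,1)"
  "Tm \<alpha> u w X $$ (0,1) = u * X$$(0,1) + cnj w * X$$(1,0)"
  "Tm \<alpha> u w X $$ (1,0) = w * X$$(0,1) + cnj u * X$$(1,0)"
  "Tm \<alpha> u w X $$ (1,1) = (1-\<alpha>) * X$$(0,0) + \<alpha> * X$$(1,1)"
  by (simp_all add: Tm_def)

lemma Tm_lin: "linear_M2 (Tm \<alpha> u w)"
  unfolding linear_M2_def
proof (intro conjI ballI allI)
  fix A B :: "complex mat" assume A: "A \<in> carrier_mat 2 2" and B: "B \<in> carrier_mat 2 2"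
  show "Tm \<alpha> u w (A + B) = Tm \<alpha> u w A + Tm \<alpha> u w B"
    by (rule eq_matI, insert A B, auto simp: Tm_def less2 algebra_simps)
next
  fix A :: "complex mat" and c :: complex assume A: "A \<in> carrier_mat 2 2"
  show "Tm \<alpha> u w (c \<cdot>\<^sub>m A) = c \<cdot>\<^sub>m Tm \<alpha> u w A"
    by (rule eq_matI, insert A, auto simp: Tm_def less2 algebra_simps)
qed simp

lemma Tm_unital: "unital_M2 (Tm \<alpha> u w)"
  unfolding unital_M2_def by (rule eq_matI, auto simp: Tm_def less2)

lemma Tm_tp: "trace_preserving_M2 (Tm \<alpha> u w)"
  unfolding trace_preserving_M2_def by (auto simp: Tm_idx Tm_idx[unfolded One_nat_def] tr2_def algebra_simps)

lemma Tm_pos: assumes al: "\<alpha> = complex_of_real a" and a: "0 \<le> a" "a \<le> 1" and uw: "cmod u + cmod w \<le> 1"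
  shows "positive_M2 (Tm \<alpha> u w)"
  unfolding positive_M2_def
proof (intro allI impI)
  fix X assume "psd2 X"
  hence X: "X \<in> carrier_mat 2 2" "X$$(1,0) = cnj (X$$(0,1))" "Im (X$$(0,0)) = 0" "Im (X$$(1,1)) = 0"
    "Re (X$$(0,0)) \<ge> 0" "Re (X$$(1,1)) \<ge> 0" "(cmod (X$$(0,1)))^2 \<le> Re (X$$(0,0)) * Re (X$$(1,1))"
    unfolding psd2_iff by auto
  define a0 where "a0 = Re (X$$(0,0))"
  define d0 where "d0 = Re (X$$(1,1))"
  define b where "b = X$$(0,1)"
  have x00: "X$$(0,0) = of_real a0" using X(3) unfolding a0_def by (simp add: complex_eq_iff)
  have x11: "X$$(1,1) = of_real d0" using X(4) unfolding d0_def by (simp add: complex_eq_iff)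
  have x10: "X$$(1,0) = cnj b" using X(2) b_def by simp
  have t00: "Tm \<alpha> u w X $$ (0,0) = of_real (a * a0 + (1-a) * d0)" unfolding Tm_idx x00 x11 al by simp
  have t11: "Tm \<alpha> u w X $$ (1,1) = of_real ((1-a) * a0 + a * d0)" unfolding Tm_idx x00 x11 al by simp
  have t01: "Tm \<alpha> u w X $$ (0,1) = u * b + cnj w * cnj b" unfolding Tm_idx x10 b_def ..
  have t10: "Tm \<alpha> u w X $$ (1,0) = cnj (u * b + cnj w * cnj b)" unfolding Tm_idx x10 b_def by simp
  have a0n: "a0 \<ge> 0" and d0n: "d0 \<ge> 0" using X unfolding a0_def d0_def by auto
  have bb: "(cmod b)^2 \<le> a0 * d0" using X(7) unfolding a0_def d0_def b_def .
  have n1: "cmod (u * b + cnj w * cnj b) \<le> cmod b"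
  proof -
    have "cmod (u * b + cnj w * cnj b) \<le> cmod u * cmod b + cmod w * cmod b"
      using norm_triangle_ineq[of "u*b" "cnj w * cnj b"] by (simp add: norm_mult)
    also have "\<dots> = (cmod u + cmod w) * cmod b" by (simp add: algebra_simps)
    also have "\<dots> \<le> 1 * cmod b" using uw by (intro mult_right_mono) auto
    finally show ?thesis by simp
  qed
  have "(cmod (u * b + cnj w * cnj b))^2 \<le> (cmod b)^2" using n1 by (intro power_mono) auto
  also have "\<dots> \<le> a0 * d0" by (rule bb)
  also have "a0 * d0 \<le> (a * a0 + (1-a) * d0) * ((1-a) * a0 + a * d0)"
  proof -
    have "(a * a0 + (1-a) * d0) * ((1-a) * a0 + a * d0) - a0 * d0 = a * (1-a) * (a0 - d0)^2"
      by (simp add: power2_eq_square algebra_simps)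
    moreover have "a * (1-a) * (a0 - d0)^2 \<ge> 0" using a by simp
    ultimately show ?thesis by simp
  qed
  finally have key: "(cmod (u * b + cnj w * cnj b))^2 \<le> (a * a0 + (1-a) * d0) * ((1-a) * a0 + a * d0)" .
  show "psd2 (Tm \<alpha> u w X)" unfolding psd2_iff
    using key a a0n d0n by (simp add: t00 t11 t01 t10[unfolded One_nat_def] t01[unfolded One_nat_def] t11[unfolded One_nat_def])
qed

lemma munit_entries: "munit2 l $$ (0,0) = (if l = 0 then 1 else 0)" "munit2 l $$ (0,1) = (if l = 1 then 1 else 0)"
      "munit2 l $$ (1,0) = (if l = 2 then 1 else 0)" "munit2 l $$ (1,1) = (if l = 3 then 1 else 0)"
proof -
  have h: "((0::nat) = l div 2 \<and> 0 = l mod 2) \<longleftrightarrow> l = 0" "((0::nat) = l div 2 \<and> 1 = l mod 2) \<longleftrightarrow> l = 1"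
    "((1::nat) = l div 2 \<and> 0 = l mod 2) \<longleftrightarrow> l = 2" "((1::nat) = l div 2 \<and> 1 = l mod 2) \<longleftrightarrow> l = 3"
    by presburger+
  have g: "\<And>i j. i < 2 \<Longrightarrow> j < 2 \<Longrightarrow> munit2 l $$ (i,j) = (if i = l div 2 \<and> j = l mod 2 then 1 else 0)"
    by (simp add: munit2_def)
  show "munit2 l $$ (0,0) = (if l = 0 then 1 else 0)" using g[of 0 0] h(1) by simp
  show "munit2 l $$ (0,1) = (if l = 1 then 1 else 0)" using g[of 0 1] h(2) by simp
  show "munit2 l $$ (1,0) = (if l = 2 then 1 else 0)" using g[of 1 0] h(3) by simp
  show "munit2 l $$ (1,1) = (if l = 3 then 1 else 0)" using g[of 1 1] h(4) by simp
qed

lemma tab: 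
  "Tm \<alpha> u w (munit2 0) $$ (0,0) = \<alpha>" "Tm \<alpha> u w (munit2 0) $$ (0,1) = 0" "Tm \<alpha> u w (munit2 0) $$ (1,0) = 0" "Tm \<alpha> u w (munit2 0) $$ (1,1) = 1 - \<alpha>"
  "Tm \<alpha> u w (munit2 1) $$ (0,0) = 0" "Tm \<alpha> u w (munit2 1) $$ (0,1) = u" "Tm \<alpha> u w (munit2 1) $$ (1,0) = w" "Tm \<alpha> u w (munit2 1) $$ (1,1) = 0"
  "Tm \<alpha> u w (munit2 2) $$ (0,0) = 0" "Tm \<alpha> u w (munit2 2) $$ (0,1) = cnj w" "Tm \<alpha> u w (munit2 2) $$ (1,0) = cnj u" "Tm \<alpha> u w (munit2 2) $$ (1,1) = 0"
  "Tm \<alpha> u w (munit2 3) $$ (0,0) = 1 - \<alpha>" "Tm \<alpha> u w (munit2 3) $$ (0,1) = 0" "Tm \<alpha> u w (munit2 3) $$ (1,0) = 0" "Tm \<alpha> u w (munit2 3) $$ (1,1) = \<alpha>"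
  unfolding Tm_idx munit_entries by simp_all

lemma cp_Tm_eval: "det (- char_matrix (op_mat (Tm \<alpha> u w)) x) =
   ((x-\<alpha>)*(x-\<alpha>) - (1-\<alpha>)*(1-\<alpha>)) * ((x-u)*(x-cnj u) - w * cnj w)"
proof -
  let ?M = "- char_matrix (op_mat (Tm \<alpha> u w)) x"
  have M: "?M \<in> carrier_mat 4 4" by simp
  have e: "\<And>k l. k < 4 \<Longrightarrow> l < 4 \<Longrightarrow> ?M $$ (k,l) = (if k = l then x else 0) - Tm \<alpha> u w (munit2 l) $$ (k div 2, k mod 2)"
    by (simp add: char_matrix_def opmat_idx)
  show ?thesis unfolding det4[OF M]
    by (simp add: e tab tab[unfolded One_nat_def]) (simp add: algebra_simps)
qed

lemma spec_Tm: assumes h: "\<And>x. (x-u)*(x-cnj u) - w*cnj w = (x-p)*(x-q)"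
  shows "spec_M2 (Tm \<alpha> u w) = {#1, 2*\<alpha>-1, p, q#}"
proof -
  have cp: "char_poly (op_mat (Tm \<alpha> u w)) = [:-1,1:] * [:-(2*\<alpha>-1),1:] * [:-p,1:] * [:-q,1:]"
  proof (rule poly_ext)
    fix x
    have "poly (char_poly (op_mat (Tm \<alpha> u w))) x = det (- char_matrix (op_mat (Tm \<alpha> u w)) x)"
      by (rule char_poly_matrix[OF opmat_car])
    also have "\<dots> = ((x-\<alpha>)*(x-\<alpha>) - (1-\<alpha>)*(1-\<alpha>)) * ((x-p)*(x-q))" unfolding cp_Tm_eval h ..
    also have "\<dots> = poly ([:-1,1:] * [:-(2*\<alpha>-1),1:] * [:-p,1:] * [:-q,1:]) x"
      by (simp add: algebra_simps)
    finally show "poly (char_poly (op_mat (Tm \<alpha> u w))) x = poly ([:-1,1:] * [:-(2*\<alpha>-1),1:] * [:-p,1:] * [:-q,1:]) x" .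
  qed
  have nz: "\<And>a::complex. [:-a,1:] \<noteq> 0" by simp
  have "proots ([:-1,1:] * [:-(2*\<alpha>-1),1:] * [:-p,1:] * [:-q,1:]) =
      proots [:-1,1:] + proots [:-(2*\<alpha>-1),1:] + proots [:-p,1:] + proots [:-q,1:]"
    by (simp only: proots_mult nz mult_eq_0_iff simp_thms)
  also have "\<dots> = {#1, 2*\<alpha>-1, p, q#}" by (simp only: proots_linear_factor minus_minus) simp
  finally show ?thesis unfolding spec_M2_def cp .
qed

lemma three_conj: assumes "image_mset cnj {#a,b,c#} = {#a,b,c#}"
  shows "\<exists>r p q. {#a,b,c#} = {#r,p,q#} \<and> cnj r = r \<and> ((cnj p = p \<and> cnj q = q) \<or> q = cnj p)"
proof -
  have "cnj a \<in># image_mset cnj {#a,b,c#}" by simp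
  hence "cnj a \<in># {#a,b,c#}" unfolding assms .
  hence "cnj a = a \<or> cnj a = b \<or> cnj a = c" by auto
  thus ?thesis
  proof (elim disjE)
    assume ha: "cnj a = a"
    hence bc: "image_mset cnj {#b,c#} = {#b,c#}" using assms by simp
    have "cnj b \<in># image_mset cnj {#b,c#}" by simp
    hence "cnj b \<in># {#b,c#}" unfolding bc .
    hence "cnj b = b \<or> cnj b = c" by auto
    thus ?thesis
    proof
      assume hb: "cnj b = b"
      hence "cnj c = c" using bc by simp
      thus ?thesis using ha hb by (intro exI[of _ a] exI[of _ b] exI[of _ c]) auto
    next
      assume "cnj b = c" thus ?thesis using ha by (intro exI[of _ a] exI[of _ b] exI[of _ c]) auto
    qed
  next
    assume hb: "cnj a = b"
    hence hb': "cnj b = a" by auto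
    have "{#a,b,c#} = add_mset a (add_mset b {#cnj c#})" using assms hb hb' by (simp add: add_mset_commute)
    hence "{#c#} = {#cnj c#}" by simp
    hence "cnj c = c" by simp
    thus ?thesis using hb by (intro exI[of _ c] exI[of _ a] exI[of _ b]) (auto simp: add_mset_commute)
  next
    assume hc: "cnj a = c"
    hence hc': "cnj c = a" by auto
    have "{#a,c,b#} = add_mset a (add_mset c {#cnj b#})" using assms hc hc' by (simp add: add_mset_commute)
    hence "{#b#} = {#cnj b#}" by simp
    hence "cnj b = b" by simp
    thus ?thesis using hc by (intro exI[of _ b] exI[of _ a] exI[of _ c]) (auto simp: add_mset_commute)
  qed
qed

lemma absum: "a + b \<le> c \<Longrightarrow> a - b \<le> c \<Longrightarrow> -a + b \<le> c \<Longrightarrow> -a - b \<le> c \<Longrightarrow> \<bar>a\<bar> + \<bar>b\<bar> \<le> (c::real)"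
  by (cases "0 \<le> a"; cases "0 \<le> b") auto

lemma real_of_cnj: "cnj z = z \<Longrightarrow> z = complex_of_real (Re z)"
  by (simp add: complex_eq_iff)

lemma part2: assumes sz: "size L = 4" and one: "1 \<in># L" and cj: "image_mset cnj L = L" and nb: "\<forall>z\<in>#L. cmod z \<le> 1"
  shows "\<exists>T. linear_M2 T \<and> unital_M2 T \<and> trace_preserving_M2 T \<and> positive_M2 T \<and> spec_M2 T = L"
proof -
  obtain L' where L: "L = add_mset 1 L'" using multi_member_split[OF one] by blast
  have s3: "size L' = 3" using sz L by simp
  have cj': "image_mset cnj L' = L'" using cj L by simp
  obtain xs where xs: "mset xs = L'" using ex_mset by blast
  have "length xs = 3" using s3 xs by auto
  then obtain a b c where "xs = [a,b,c]" by (auto simp: length_Suc_conv numeral_3_eq_3)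
  hence L'abc: "L' = {#a,b,c#}" using xs by simp
  obtain r p q where rpq: "{#a,b,c#} = {#r,p,q#}" and rr: "cnj r = r" and pq: "(cnj p = p \<and> cnj q = q) \<or> q = cnj p"
    using three_conj[of a b c] cj' L'abc by blast
  have Lrpq: "L = {#1, r, p, q#}" using L L'abc rpq by simp
  have nr: "cmod r \<le> 1" and np: "cmod p \<le> 1" and nq: "cmod q \<le> 1" using nb Lrpq by auto
  define ar where "ar = (1 + Re r) / 2"
  define \<alpha> where "\<alpha> = complex_of_real ar"
  have ar: "0 \<le> ar" "ar \<le> 1" using abs_Re_le_cmod[of r] nr unfolding ar_def by auto
  have r2: "2 * \<alpha> - 1 = r"
  proof -
    have "2 * \<alpha> - 1 = complex_of_real (Re r)" unfolding \<alpha>_def ar_def by (simp add: complex_eq_iff field_simps)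
    also have "\<dots> = r" using real_of_cnj[OF rr] by simp
    finally show ?thesis .
  qed
  from pq obtain u w where uw: "cmod u + cmod w \<le> 1" and h: "\<And>x. (x-u)*(x-cnj u) - w*cnj w = (x-p)*(x-q)"
  proof (elim disjE conjE)
    assume hp: "cnj p = p" and hq: "cnj q = q" and th: "\<And>u w. cmod u + cmod w \<le> 1 \<Longrightarrow> (\<And>x. (x-u)*(x-cnj u) - w*cnj w = (x-p)*(x-q)) \<Longrightarrow> thesis"
    define P where "P = Re p"
    define Q where "Q = Re q"
    have pP: "p = complex_of_real P" unfolding P_def by (rule real_of_cnj[OF hp])
    have qQ: "q = complex_of_real Q" unfolding Q_def by (rule real_of_cnj[OF hq])
    have P1: "\<bar>P\<bar> \<le> 1" using np pP by simp
    have Q1: "\<bar>Q\<bar> \<le> 1" using nq qQ by simp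
    show thesis
    proof (rule th[of "complex_of_real ((P+Q)/2)" "complex_of_real ((P-Q)/2)"])
      have "\<bar>(P+Q)/2\<bar> + \<bar>(P-Q)/2\<bar> \<le> 1" proof (rule absum)
        have "P \<le> 1" "-P \<le> 1" "Q \<le> 1" "-Q \<le> 1" using P1 Q1 unfolding abs_le_iff by auto
        thus "(P+Q)/2 + (P-Q)/2 \<le> 1" "(P+Q)/2 - (P-Q)/2 \<le> 1" "-((P+Q)/2) + (P-Q)/2 \<le> 1" "-((P+Q)/2) - (P-Q)/2 \<le> 1"
          by (simp_all add: field_simps)
      qed
      thus "cmod (complex_of_real ((P+Q)/2)) + cmod (complex_of_real ((P-Q)/2)) \<le> 1" unfolding norm_of_real .
    next
      fix x :: complex
      show "(x - complex_of_real ((P+Q)/2)) * (x - cnj (complex_of_real ((P+Q)/2))) -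
        complex_of_real ((P-Q)/2) * cnj (complex_of_real ((P-Q)/2)) = (x-p)*(x-q)"
        unfolding pP qQ by (simp add: field_simps)
    qed
  next
    assume hq: "q = cnj p" and th: "\<And>u w. cmod u + cmod w \<le> 1 \<Longrightarrow> (\<And>x. (x-u)*(x-cnj u) - w*cnj w = (x-p)*(x-q)) \<Longrightarrow> thesis"
    show thesis by (rule th[of p 0], use np in simp, simp add: hq)
  qed
  let ?T = "Tm \<alpha> u w"
  have "spec_M2 ?T = {#1, 2*\<alpha>-1, p, q#}" by (rule spec_Tm[OF h])
  hence "spec_M2 ?T = L" unfolding r2 Lrpq .
  moreover have "positive_M2 ?T" by (rule Tm_pos[OF \<alpha>_def ar uw])
  ultimately show ?thesis using Tm_lin Tm_unital Tm_tp by blast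
qed


theorem theorem2:
  shows "(\<forall>T. linear_M2 T \<and> positive_M2 T \<and> trace_preserving_M2 T \<longrightarrow>
            (1 \<in># spec_M2 T \<and> image_mset cnj (spec_M2 T) = spec_M2 T) \<and>
            (\<forall>z \<in># spec_M2 T. cmod z \<le> 1))
       \<and> (\<forall>L :: complex multiset. size L = 4 \<and>
            (1 \<in># L \<and> image_mset cnj L = L) \<and> (\<forall>z \<in># L. cmod z \<le> 1) \<longrightarrow>
            (\<exists>T. linear_M2 T \<and> unital_M2 T \<and> trace_preserving_M2 T \<and> positive_M2 T \<and>
                 spec_M2 T = L))"
proof (intro conjI allI impI)
  fix T assume h: "linear_M2 T \<and> positive_M2 T \<and> trace_preserving_M2 T"
  show "1 \<in># spec_M2 T" using one_in_spec h by blast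
  show "image_mset cnj (spec_M2 T) = spec_M2 T" using conj_spec h by blast
  show "\<forall>z \<in># spec_M2 T. cmod z \<le> 1" using spec_bound h by blast
next
  fix L :: "complex multiset"
  assume h: "size L = 4 \<and> (1 \<in># L \<and> image_mset cnj L = L) \<and> (\<forall>z \<in># L. cmod z \<le> 1)"
  show "\<exists>T. linear_M2 T \<and> unital_M2 T \<and> trace_preserving_M2 T \<and> positive_M2 T \<and> spec_M2 T = L"
    using part2 h by blast
qed

end
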